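(* Let $T$ be a prae-dilator and let $(X,\iota_X,L_X)$ be a Bachmann-Howard system for $T$. Then the relation $<_{\vartheta_T(X)}$ is a (strict) linear order on $\vartheta_T(X)$.
   Context: The finite subset functor $[\cdot]^{<\omega}$ sends a set $X$ to the set of its finite subsets and a function $f$ to $[f]^{<\omega}(a)=\{f(x)\mid x\in a\}$; subsets of linear orders are regarded as suborders. A prae-dilator consists of an endofunctor $X\mapsto T_X$ on the category of linear orders (morphisms: order embeddings) and a natural transformation $\operatorname{supp}^T:T\Rightarrow[\cdot]^{<\omega}$ such that for every linear order $X$ and every $\sigma\in T_X$ we have $\sigma\in\operatorname{rng}(T_{\iota_\sigma})$, where $\iota_\sigma:\operatorname{supp}^T_X(\sigma)\hookrightarrow X$ is the inclusion. For a linear order $Z$ and finite $a,b\subseteq Z$ write $a<^{\operatorname{fin}}_Z b$ iff for every $s\in a$ there is $t\in b$ with $s<_Z t$; $\leq^{\operatorname{fin}}_Z$ is defined analogously with $\leq_Z$; singletons $\{s\}$ are written $s$. For a linear order $X$ let $\vartheta_T(X)$ be the set of formal terms $\vartheta\sigma$ with $\sigma\in T_X$. A Bachmann-Howard system (for $T$) is a triple $(X,\iota_X,L_X)$ with $X$ a linear order, $\iota_X:X\to\vartheta_T(X)$ and $L_X:X\to\omega$ functions, such that $L_{\vartheta_T(X)}\circ\iota_X=L_X$, where $L_{\vartheta_T(X)}(\vartheta\sigma):=\max\{L_X(x)\mid x\in\operatorname{supp}^T_X(\sigma)\}+1$ (maximum of the empty set is $0$). For such a system the relation $\vartheta\sigma<_{\vartheta_T(X)}\vartheta\tau$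 is defined by recursion on $L_{\vartheta_T(X)}(\vartheta\sigma)+L_{\vartheta_T(X)}(\vartheta\tau)$ to hold iff either (a) $\sigma<_{T_X}\tau$ and $[\iota_X]^{<\omega}(\operatorname{supp}^T_X(\sigma))<^{\operatorname{fin}}_{\vartheta_T(X)}\vartheta\tau$, or (b) $\tau<_{T_X}\sigma$ and $\vartheta\sigma\leq^{\operatorname{fin}}_{\vartheta_T(X)}[\iota_X]^{<\omega}(\operatorname{supp}^T_X(\tau))$. (Here $\leq_{\vartheta_T(X)}$ means $<_{\vartheta_T(X)}$ or equality of terms; the recursion is well-defined since $L_{\vartheta_T(X)}(\iota_X(x))<L_{\vartheta_T(X)}(\vartheta\sigma)$ for $x\in\operatorname{supp}^T_X(\sigma)$.) *)

theory Defs
  imports Main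
begin

definition lin_ord :: "'a set \<Rightarrow> 'a rel \<Rightarrow> bool" where
  "lin_ord A r \<longleftrightarrow> strict_linear_order_on A r \<and> r \<subseteq> A \<times> A"

definition restr :: "'a rel \<Rightarrow> 'a set \<Rightarrow> 'a rel" where
  "restr r S = r \<inter> (S \<times> S)"

definition ord_emb :: "'a set \<Rightarrow> 'a rel \<Rightarrow> 'c set \<Rightarrow> 'c rel \<Rightarrow> ('a \<Rightarrow> 'c) \<Rightarrow> bool" where
  "ord_emb A r B s f \<longleftrightarrow> f ` A \<subseteq> B \<and>
     (\<forall>x\<in>A. \<forall>y\<in>A. (x, y) \<in> r \<longleftrightarrow> (f x, f y) \<in> s)"

text \<open>A prae-dilator, acting on linear orders whose carriers are subsets of the type 'a.
  TO A r is the carrier of T_(A,r), TR A r its order, TM A r B s f the image T_f of a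
  morphism f : (A,r) -> (B,s), and supp A r the support function supp^T_(A,r).\<close>
definition prae_dilator ::
  "('a set \<Rightarrow> 'a rel \<Rightarrow> 'b set) \<Rightarrow> ('a set \<Rightarrow> 'a rel \<Rightarrow> 'b rel)
   \<Rightarrow> ('a set \<Rightarrow> 'a rel \<Rightarrow> 'a set \<Rightarrow> 'a rel \<Rightarrow> ('a \<Rightarrow> 'a) \<Rightarrow> 'b \<Rightarrow> 'b)
   \<Rightarrow> ('a set \<Rightarrow> 'a rel \<Rightarrow> 'b \<Rightarrow> 'a set) \<Rightarrow> bool" where
  "prae_dilator TO TR TM supp \<longleftrightarrow>
    \<comment> \<open>functor on objects\<close>
    (\<forall>A r. lin_ord A r \<longrightarrow> lin_ord (TO A r) (TR A r)) \<and>
    \<comment> \<open>functor on morphisms: T_f is an embedding T_X -> T_Y\<close>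
    (\<forall>A r B s f. lin_ord A r \<longrightarrow> lin_ord B s \<longrightarrow> ord_emb A r B s f \<longrightarrow>
        ord_emb (TO A r) (TR A r) (TO B s) (TR B s) (TM A r B s f)) \<and>
    \<comment> \<open>T_f depends only on f as a function on the carrier\<close>
    (\<forall>A r B s f g. lin_ord A r \<longrightarrow> lin_ord B s \<longrightarrow> ord_emb A r B s f \<longrightarrow>
        (\<forall>x\<in>A. f x = g x) \<longrightarrow> (\<forall>\<sigma>\<in>TO A r. TM A r B s f \<sigma> = TM A r B s g \<sigma>)) \<and>
    \<comment> \<open>preservation of identities\<close>
    (\<forall>A r. lin_ord A r \<longrightarrow> (\<forall>\<sigma>\<in>TO A r. TM A r A r id \<sigma> = \<sigma>)) \<and>
    \<comment> \<open>preservation of composition\<close>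
    (\<forall>A r B s C t f g. lin_ord A r \<longrightarrow> lin_ord B s \<longrightarrow> lin_ord C t \<longrightarrow>
        ord_emb A r B s f \<longrightarrow> ord_emb B s C t g \<longrightarrow>
        (\<forall>\<sigma>\<in>TO A r. TM A r C t (g \<circ> f) \<sigma> = TM B s C t g (TM A r B s f \<sigma>))) \<and>
    \<comment> \<open>supp_X : T_X -> [X]^<omega\<close>
    (\<forall>A r. lin_ord A r \<longrightarrow> (\<forall>\<sigma>\<in>TO A r. finite (supp A r \<sigma>) \<and> supp A r \<sigma> \<subseteq> A)) \<and>
    \<comment> \<open>naturality of supp\<close>
    (\<forall>A r B s f. lin_ord A r \<longrightarrow> lin_ord B s \<longrightarrow> ord_emb A r B s f \<longrightarrow>
        (\<forall>\<sigma>\<in>TO A r. supp B s (TM A r B s f \<sigma>) = f ` supp A r \<sigma>)) \<and>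
    \<comment> \<open>support condition: sigma in rng(T_iota_sigma)\<close>
    (\<forall>A r. lin_ord A r \<longrightarrow> (\<forall>\<sigma>\<in>TO A r.
        \<sigma> \<in> TM (supp A r \<sigma>) (restr r (supp A r \<sigma>)) A r id ` TO (supp A r \<sigma>) (restr r (supp A r \<sigma>))))"

datatype 'b theta_term = Theta 'b

definition theta_set :: "('a set \<Rightarrow> 'a rel \<Rightarrow> 'b set) \<Rightarrow> 'a set \<Rightarrow> 'a rel \<Rightarrow> 'b theta_term set" where
  "theta_set TO A r = Theta ` TO A r"

fun L_theta :: "('a set \<Rightarrow> 'a rel \<Rightarrow> 'b \<Rightarrow> 'a set) \<Rightarrow> 'a set \<Rightarrow> 'a rel \<Rightarrow> ('a \<Rightarrow> nat)
    \<Rightarrow> 'b theta_term \<Rightarrow> nat" where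
  "L_theta supp A r L (Theta \<sigma>) = Max (insert 0 (L ` supp A r \<sigma>)) + 1"

definition BH_system ::
  "('a set \<Rightarrow> 'a rel \<Rightarrow> 'b set) \<Rightarrow> ('a set \<Rightarrow> 'a rel \<Rightarrow> 'b \<Rightarrow> 'a set)
   \<Rightarrow> 'a set \<Rightarrow> 'a rel \<Rightarrow> ('a \<Rightarrow> 'b theta_term) \<Rightarrow> ('a \<Rightarrow> nat) \<Rightarrow> bool" where
  "BH_system TO supp A r \<iota> L \<longleftrightarrow>
     lin_ord A r \<and> \<iota> ` A \<subseteq> theta_set TO A r \<and>
     (\<forall>x\<in>A. L_theta supp A r L (\<iota> x) = L x)"

text \<open>The paper defines it by recursion on
  L(theta sigma) + L(theta tau); all recursive occurrences are positive, so it is the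
  least (and, by well-foundedness of the recursion, the unique) relation satisfying
  the defining clauses (a) and (b).\<close>
inductive theta_less for TO TR supp A r \<iota> where
  clause_a: "\<sigma> \<in> TO A r \<Longrightarrow> \<tau> \<in> TO A r \<Longrightarrow> (\<sigma>, \<tau>) \<in> TR A r \<Longrightarrow>
     (\<forall>x\<in>supp A r \<sigma>. theta_less TO TR supp A r \<iota> (\<iota> x) (Theta \<tau>)) \<Longrightarrow>
     theta_less TO TR supp A r \<iota> (Theta \<sigma>) (Theta \<tau>)"
| clause_b: "\<sigma> \<in> TO A r \<Longrightarrow> \<tau> \<in> TO A r \<Longrightarrow> (\<tau>, \<sigma>) \<in> TR A r \<Longrightarrow>
     (\<exists>y\<in>supp A r \<tau>. theta_less TO TR supp A r \<iota> (Theta \<sigma>) (\<iota> y) \<or> Theta \<sigma> = \<iota> y) \<Longrightarrow>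
     theta_less TO TR supp A r \<iota> (Theta \<sigma>) (Theta \<tau>)"

end

theory Submission
  imports Defs
begin

locale bhctx =
  fixes TO :: "'a set \<Rightarrow> 'a rel \<Rightarrow> 'b set"
    and TR :: "'a set \<Rightarrow> 'a rel \<Rightarrow> 'b rel"
    and TM :: "'a set \<Rightarrow> 'a rel \<Rightarrow> 'a set \<Rightarrow> 'a rel \<Rightarrow> ('a \<Rightarrow> 'a) \<Rightarrow> 'b \<Rightarrow> 'b"
    and supp :: "'a set \<Rightarrow> 'a rel \<Rightarrow> 'b \<Rightarrow> 'a set"
    and A :: "'a set" and r :: "'a rel"
    and \<iota> :: "'a \<Rightarrow> 'b theta_term" and L :: "'a \<Rightarrow> nat"
  assumes pd: "prae_dilator TO TR TM supp"
    and bh: "BH_system TO supp A r \<iota> L"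
begin

abbreviation less where "less u v \<equiv> theta_less TO TR supp A r \<iota> u v"
abbreviation Lt where "Lt u \<equiv> L_theta supp A r L u"

lemma linA: "lin_ord A r" using bh by (simp add: BH_system_def)

lemma linT: "lin_ord (TO A r) (TR A r)" using pd linA by (simp add: prae_dilator_def)

lemma T_irr: "(\<sigma>, \<sigma>) \<notin> TR A r"
  using linT by (auto simp: lin_ord_def strict_linear_order_on_def irrefl_def)

lemma T_trans: "(\<sigma>, \<tau>) \<in> TR A r \<Longrightarrow> (\<tau>, \<rho>) \<in> TR A r \<Longrightarrow> (\<sigma>, \<rho>) \<in> TR A r"
  using linT unfolding lin_ord_def strict_linear_order_on_def by (meson transD)

lemma T_total: "\<sigma> \<in> TO A r \<Longrightarrow> \<tau> \<in> TO A r \<Longrightarrow> \<sigma> \<noteq> \<tau> \<Longrightarrow>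
   (\<sigma>, \<tau>) \<in> TR A r \<or> (\<tau>, \<sigma>) \<in> TR A r"
  using linT unfolding lin_ord_def strict_linear_order_on_def total_on_def by blast

lemma suppA: "\<sigma> \<in> TO A r \<Longrightarrow> finite (supp A r \<sigma>) \<and> supp A r \<sigma> \<subseteq> A"
  using pd linA by (simp add: prae_dilator_def)

lemma iota_in: "x \<in> A \<Longrightarrow> \<iota> x \<in> theta_set TO A r"
  using bh by (auto simp: BH_system_def)

lemma Lsupp: assumes "\<sigma> \<in> TO A r" "x \<in> supp A r \<sigma>"
  shows "Lt (\<iota> x) < Lt (Theta \<sigma>)"
proof -
  have f: "finite (supp A r \<sigma>)" and s: "supp A r \<sigma> \<subseteq> A" using suppA[OF assms(1)] by auto
  have "Lt (\<iota> x) = L x" using bh s assms(2) by (auto simp: BH_system_def)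
  moreover have "L x \<le> Max (insert 0 (L ` supp A r \<sigma>))"
    using f assms(2) by (intro Max_ge) auto
  ultimately show ?thesis by simp
qed

lemma irr: "\<not> less u u"
proof
  assume "less u u"
  then show False by (cases rule: theta_less.cases) (auto simp: T_irr)
qed

lemma less_inv: "less (Theta \<sigma>) (Theta \<tau>) \<Longrightarrow> \<sigma> \<in> TO A r \<and> \<tau> \<in> TO A r \<and>
   (((\<sigma>, \<tau>) \<in> TR A r \<and> (\<forall>x\<in>supp A r \<sigma>. less (\<iota> x) (Theta \<tau>))) \<or>
    ((\<tau>, \<sigma>) \<in> TR A r \<and> (\<exists>y\<in>supp A r \<tau>. less (Theta \<sigma>) (\<iota> y) \<or> Theta \<sigma> = \<iota> y)))"
  by (erule theta_less.cases) auto

lemma trans_aux: "Lt a + Lt b + Lt c = n \<Longrightarrow> less a b \<Longrightarrow> less b c \<Longrightarrow> less a c"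
proof (induction n arbitrary: a b c rule: less_induct)
  case (less n)
  have IH: "less a' c'" if "Lt a' + Lt b' + Lt c' < Lt a + Lt b + Lt c" "less a' b'" "less b' c'"
    for a' b' c'
    using less.IH[OF _ refl that(2,3)] that(1) less.prems(1) by blast
  have ab0: "less a b" and bc0: "less b c" using less.prems(2,3) by blast+
  from ab0 obtain \<rho> \<sigma> where a: "a = Theta \<rho>" and b: "b = Theta \<sigma>"
     and \<rho>T: "\<rho> \<in> TO A r" and \<sigma>T: "\<sigma> \<in> TO A r"
    by (cases rule: theta_less.cases) auto
  from bc0 obtain \<tau> where c: "c = Theta \<tau>" and \<tau>T: "\<tau> \<in> TO A r"
    by (cases rule: theta_less.cases) auto
  have La: "Lt (\<iota> x) < Lt a" if "x \<in> supp A r \<rho>" for x using Lsupp[OF \<rho>T that] a by simp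
  have Lb: "Lt (\<iota> x) < Lt b" if "x \<in> supp A r \<sigma>" for x using Lsupp[OF \<sigma>T that] b by simp
  have Lc: "Lt (\<iota> x) < Lt c" if "x \<in> supp A r \<tau>" for x using Lsupp[OF \<tau>T that] c by simp
  from less_inv[OF ab0[unfolded a b]]
  consider (ab_a) "(\<rho>, \<sigma>) \<in> TR A r" "\<forall>x\<in>supp A r \<rho>. less (\<iota> x) b"
    | (ab_b) "(\<sigma>, \<rho>) \<in> TR A r" "\<exists>y\<in>supp A r \<sigma>. less a (\<iota> y) \<or> a = \<iota> y"
    using a b by blast
  then show ?case
  proof cases
    case ab: ab_a
    have xb: "less (\<iota> x) b" if "x \<in> supp A r \<rho>" for x using ab(2) that by blast
    have xc: "less (\<iota> x) c" if x: "x \<in> supp A r \<rho>" for x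
    proof -
      have "Lt (\<iota> x) + Lt b + Lt c < Lt a + Lt b + Lt c" using La[OF x] by linarith
      then show ?thesis using IH xb[OF x] bc0 by blast
    qed
    from less_inv[OF bc0[unfolded b c]]
    consider (bc_a) "(\<sigma>, \<tau>) \<in> TR A r" "\<forall>x\<in>supp A r \<sigma>. less (\<iota> x) c"
      | (bc_b) "(\<tau>, \<sigma>) \<in> TR A r" "\<exists>y\<in>supp A r \<tau>. less b (\<iota> y) \<or> b = \<iota> y"
      using b c by blast
    then show ?thesis
    proof cases
      case bc: bc_a
      show ?thesis unfolding a c
        by (rule theta_less.clause_a) (use \<rho>T \<tau>T T_trans[OF ab(1) bc(1)] xc c in auto)
    next
      case bc: bc_b
      then obtain y where y: "y \<in> supp A r \<tau>" and hby: "less b (\<iota> y) \<or> b = \<iota> y"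
        by blast
      show ?thesis
      proof (cases "\<rho> = \<tau>")
        case True
        then have yr: "y \<in> supp A r \<rho>" using y by simp
        have l1: "less (\<iota> y) b" using xb[OF yr] .
        have "less (\<iota> y) (\<iota> y)"
        proof (cases "b = \<iota> y")
          case True then show ?thesis using l1 by simp
        next
          case False
          then have l2: "less b (\<iota> y)" using hby by simp
          have "Lt (\<iota> y) + Lt b + Lt (\<iota> y) < Lt a + Lt b + Lt c" using La[OF yr] Lc[OF y] by linarith
          then show ?thesis using IH l1 l2 by blast
        qed
        then show ?thesis using irr by blast
      next
        case False
        then consider "(\<rho>, \<tau>) \<in> TR A r" | "(\<tau>, \<rho>) \<in> TR A r" using T_total \<rho>T \<tau>T by blast
        then show ?thesis
        proof cases
          case 1
          show ?thesis unfolding a c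
            by (rule theta_less.clause_a) (use \<rho>T \<tau>T 1 xc c in auto)
        next
          case 2
          have "less a (\<iota> y)"
          proof (cases "b = \<iota> y")
            case True then show ?thesis using ab0 by simp
          next
            case False
            then have l2: "less b (\<iota> y)" using hby by simp
            have "Lt a + Lt b + Lt (\<iota> y) < Lt a + Lt b + Lt c" using Lc[OF y] by linarith
            then show ?thesis using IH ab0 l2 by blast
          qed
          then have ex: "\<exists>y\<in>supp A r \<tau>. less (Theta \<rho>) (\<iota> y) \<or> Theta \<rho> = \<iota> y"
            using y a by blast
          show ?thesis unfolding a c
            by (rule theta_less.clause_b) (use \<rho>T \<tau>T 2 ex in auto)
        qed
      qed
    qed
  next
    case ab: ab_b
    then obtain y where y: "y \<in> supp A r \<sigma>" and ay: "less a (\<iota> y) \<or> a = \<iota> y"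
      by blast
    from less_inv[OF bc0[unfolded b c]]
    consider (bc_a) "(\<sigma>, \<tau>) \<in> TR A r" "\<forall>x\<in>supp A r \<sigma>. less (\<iota> x) c"
      | (bc_b) "(\<tau>, \<sigma>) \<in> TR A r" "\<exists>y\<in>supp A r \<tau>. less b (\<iota> y) \<or> b = \<iota> y"
      using b c by blast
    then show ?thesis
    proof cases
      case bc: bc_a
      have yc: "less (\<iota> y) c" using bc(2) y by blast
      show ?thesis
      proof (cases "a = \<iota> y")
        case True then show ?thesis using yc by simp
      next
        case False
        then have "less a (\<iota> y)" using ay by simp
        moreover have "Lt a + Lt (\<iota> y) + Lt c < Lt a + Lt b + Lt c" using Lb[OF y] by linarith
        ultimately show ?thesis using IH yc by blast
      qed
    next
      case bc: bc_b
      then obtain z where z: "z \<in> supp A r \<tau>" and bz: "less b (\<iota> z) \<or> b = \<iota> z"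
        by blast
      have az: "less a (\<iota> z)"
      proof (cases "b = \<iota> z")
        case True then show ?thesis using ab0 by simp
      next
        case False
        then have "less b (\<iota> z)" using bz by simp
        moreover have "Lt a + Lt b + Lt (\<iota> z) < Lt a + Lt b + Lt c" using Lc[OF z] by linarith
        ultimately show ?thesis using IH ab0 by blast
      qed
      have ex: "\<exists>y\<in>supp A r \<tau>. less (Theta \<rho>) (\<iota> y) \<or> Theta \<rho> = \<iota> y"
        using z az a by blast
      show ?thesis unfolding a c
        by (rule theta_less.clause_b) (use \<rho>T \<tau>T T_trans[OF bc(1) ab(1)] ex in auto)
    qed
  qed
qed

lemma total_aux: "Lt a + Lt b = n \<Longrightarrow> a \<in> theta_set TO A r \<Longrightarrow> b \<in> theta_set TO A r \<Longrightarrow>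
   a \<noteq> b \<Longrightarrow> less a b \<or> less b a"
proof (induction n arbitrary: a b rule: less_induct)
  case (less n)
  note IH = less.IH
  obtain \<sigma> \<tau> where a: "a = Theta \<sigma>" and b: "b = Theta \<tau>" and \<sigma>T: "\<sigma> \<in> TO A r"
    and \<tau>T: "\<tau> \<in> TO A r" using less.prems(2,3) by (auto simp: theta_set_def)
  have ne: "\<sigma> \<noteq> \<tau>" using less.prems(4) a b by auto
  have key: "less (Theta \<sigma>) (Theta \<tau>) \<or> less (Theta \<tau>) (Theta \<sigma>)"
    if st: "(\<sigma>, \<tau>) \<in> TR A r" and \<sigma>T: "\<sigma> \<in> TO A r" and \<tau>T: "\<tau> \<in> TO A r"
      and IH': "\<And>x. x \<in> supp A r \<sigma> \<Longrightarrow> \<iota> x \<noteq> Theta \<tau> \<Longrightarrow>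
           less (\<iota> x) (Theta \<tau>) \<or> less (Theta \<tau>) (\<iota> x)"
    for \<sigma> \<tau>
  proof (cases "\<forall>x\<in>supp A r \<sigma>. less (\<iota> x) (Theta \<tau>)")
    case True
    then show ?thesis using st \<sigma>T \<tau>T by (auto intro: theta_less.clause_a)
  next
    case False
    then obtain x where x: "x \<in> supp A r \<sigma>" and nx: "\<not> less (\<iota> x) (Theta \<tau>)" by blast
    then have "less (Theta \<tau>) (\<iota> x) \<or> Theta \<tau> = \<iota> x" using IH'[OF x] by auto
    then show ?thesis using st \<sigma>T \<tau>T x by (blast intro: theta_less.clause_b)
  qed
  have IHs: "less (\<iota> x) (Theta \<tau>') \<or> less (Theta \<tau>') (\<iota> x)"
    if "\<sigma>' \<in> TO A r" "\<tau>' \<in> TO A r" "x \<in> supp A r \<sigma>'" "\<iota> x \<noteq> Theta \<tau>'"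
      "Lt (Theta \<sigma>') + Lt (Theta \<tau>') = n" for \<sigma>' \<tau>' x
  proof -
    have xA: "x \<in> A" using suppA[OF that(1)] that(3) by auto
    have "Lt (\<iota> x) < Lt (Theta \<sigma>')" using Lsupp[OF that(1,3)] .
    then show ?thesis using IH[of "Lt (\<iota> x) + Lt (Theta \<tau>')" "\<iota> x" "Theta \<tau>'"] that
        iota_in[OF xA] by (auto simp: theta_set_def)
  qed
  consider "(\<sigma>, \<tau>) \<in> TR A r" | "(\<tau>, \<sigma>) \<in> TR A r" using T_total[OF \<sigma>T \<tau>T ne] by blast
  then show ?case
  proof cases
    case 1
    show ?thesis unfolding a b
      using key[OF 1 \<sigma>T \<tau>T] IHs[OF \<sigma>T \<tau>T] less.prems(1) a b by blast
  next
    case 2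
    have "less (\<iota> x) (Theta \<sigma>) \<or> less (Theta \<sigma>) (\<iota> x)"
      if "x \<in> supp A r \<tau>" "\<iota> x \<noteq> Theta \<sigma>" for x
      using IHs[OF \<tau>T \<sigma>T that] less.prems(1) a b by (simp add: add.commute)
    then show ?thesis unfolding a b
      using key[OF 2 \<tau>T \<sigma>T] by blast
  qed
qed

lemma main: "strict_linear_order_on (theta_set TO A r) {(u, v). less u v}"
  unfolding strict_linear_order_on_def
proof (intro conjI)
  show "trans {(u, v). less u v}"
    by (auto intro!: transI intro: trans_aux)
  show "irrefl {(u, v). less u v}" using irr by (auto simp: irrefl_def)
  show "total_on (theta_set TO A r) {(u, v). less u v}"
    unfolding total_on_def using total_aux by blast
qed

end

theorem lemma3p4:
  fixes TO :: "'a set \<Rightarrow> 'a rel \<Rightarrow> 'b set"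
    and TR :: "'a set \<Rightarrow> 'a rel \<Rightarrow> 'b rel"
    and TM :: "'a set \<Rightarrow> 'a rel \<Rightarrow> 'a set \<Rightarrow> 'a rel \<Rightarrow> ('a \<Rightarrow> 'a) \<Rightarrow> 'b \<Rightarrow> 'b"
    and supp :: "'a set \<Rightarrow> 'a rel \<Rightarrow> 'b \<Rightarrow> 'a set"
    and A :: "'a set" and r :: "'a rel"
    and \<iota> :: "'a \<Rightarrow> 'b theta_term" and L :: "'a \<Rightarrow> nat"
  assumes "prae_dilator TO TR TM supp"
    and "BH_system TO supp A r \<iota> L"
  shows "strict_linear_order_on (theta_set TO A r)
           {(u, v). theta_less TO TR supp A r \<iota> u v}"
proof -
  interpret bhctx TO TR TM supp A r \<iota> L using assms by unfold_locales
  show ?thesis by (rule main)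
qed

end
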